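(* Let $s_{in}>0$ be a constant and consider the two-species chemostat $$\dot x_1=(\mu_1(s)-D(t)-b_1)x_1,\quad \dot x_2=(\mu_2(s)-D(t)-b_2)x_2,\quad \dot s=D(t)(s_{in}-s)-g_1(s)x_1-g_2(s)x_2,$$ with state $(x_1,x_2,s)\in(0,+\infty)^2\times(0,s_{in})$, output $y=s$ and input $D$ measurable essentially bounded with values in $[0,+\infty)$. Let $\kappa(s):=\frac{d}{ds}\ln\left(\frac{g_1(s)}{g_2(s)}\right)$. Assume there is a constant $c>0$ such that either (A1) $\kappa(s)\neq0$ and $\frac{\mu_2(s)-\mu_1(s)+b_1-b_2}{\kappa(s)}\le -c$ for all $s\in(0,s_{in})$, or (A2) $\kappa(s)\neq0$ and $\frac{\mu_2(s)-\mu_1(s)+b_1-b_2}{\kappa(s)}\ge c$ for all $s\in(0,s_{in})$. Then for every $r\ge s_{in}/c$, the system is strongly observable in time $r$.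
   Context: For $i=1,2$: $\mu_i,g_i:[0,+\infty)\to[0,+\infty)$ are continuously differentiable bounded functions with $\mu_i(0)=g_i(0)=0$ and $\mu_i(s)>0$, $g_i(s)>0$ for all $s>0$; $b_i\ge 0$ are constants. For every input and initial state in $(0,+\infty)^2\times(0,s_{in})$ there is a unique solution remaining there for all $t\ge0$. The system is strongly observable in time $r>0$ if for every input $D$ on $[0,r]$ and every two distinct initial states, the $s$-components $s(t),\bar s(t)$ of the two corresponding solutions satisfy $\max_{t\in[0,r]}|s(t)-\bar s(t)|>0$. *)

theory Defs
  imports "HOL-Analysis.Analysis"
begin

definition kinetic_fun :: "(real \<Rightarrow> real) \<Rightarrow> bool" where
  "kinetic_fun f \<longleftrightarrow>
     (\<exists>f'. (\<forall>s\<ge>0. (f has_real_derivative f' s) (at s within {0..})) \<and> continuous_on {0..} f')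
     \<and> bounded (f ` {0..})
     \<and> (\<forall>s\<ge>0. f s \<ge> 0)
     \<and> f 0 = 0
     \<and> (\<forall>s>0. f s > 0)"

definition admissible_input :: "real \<Rightarrow> (real \<Rightarrow> real) \<Rightarrow> bool" where
  "admissible_input r D \<longleftrightarrow>
     D \<in> borel_measurable (restrict_space lborel {0..r})
     \<and> (\<exists>B. AE t in lborel. t \<in> {0..r} \<longrightarrow> \<bar>D t\<bar> \<le> B)
     \<and> (\<forall>t\<in>{0..r}. D t \<ge> 0)"

definition chemostat_solution ::
  "(real \<Rightarrow> real) \<Rightarrow> (real \<Rightarrow> real) \<Rightarrow> (real \<Rightarrow> real) \<Rightarrow> (real \<Rightarrow> real) \<Rightarrow> real \<Rightarrow> real \<Rightarrow> real
   \<Rightarrow> (real \<Rightarrow> real) \<Rightarrow> real \<Rightarrow> (real \<Rightarrow> real) \<Rightarrow> (real \<Rightarrow> real) \<Rightarrow> (real \<Rightarrow> real) \<Rightarrow> bool" where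
  "chemostat_solution mu1 mu2 g1 g2 b1 b2 s_in D r x1 x2 s \<longleftrightarrow>
     (\<forall>t\<in>{0..r}. 0 < x1 t \<and> 0 < x2 t \<and> 0 < s t \<and> s t < s_in)
     \<and> continuous_on {0..r} x1 \<and> continuous_on {0..r} x2 \<and> continuous_on {0..r} s
     \<and> (\<forall>t\<in>{0..r}. ((\<lambda>\<tau>. (mu1 (s \<tau>) - D \<tau> - b1) * x1 \<tau>) has_integral (x1 t - x1 0)) {0..t})
     \<and> (\<forall>t\<in>{0..r}. ((\<lambda>\<tau>. (mu2 (s \<tau>) - D \<tau> - b2) * x2 \<tau>) has_integral (x2 t - x2 0)) {0..t})
     \<and> (\<forall>t\<in>{0..r}. ((\<lambda>\<tau>. D \<tau> * (s_in - s \<tau>) - g1 (s \<tau>) * x1 \<tau> - g2 (s \<tau>) * x2 \<tau>)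
                        has_integral (s t - s 0)) {0..t})"

definition strongly_observable ::
  "(real \<Rightarrow> real) \<Rightarrow> (real \<Rightarrow> real) \<Rightarrow> (real \<Rightarrow> real) \<Rightarrow> (real \<Rightarrow> real) \<Rightarrow> real \<Rightarrow> real \<Rightarrow> real
   \<Rightarrow> real \<Rightarrow> bool" where
  "strongly_observable mu1 mu2 g1 g2 b1 b2 s_in r \<longleftrightarrow>
     r > 0 \<and>
     (\<forall>D. admissible_input r D \<longrightarrow>
       (\<forall>x1 x2 s x1' x2' s'.
          chemostat_solution mu1 mu2 g1 g2 b1 b2 s_in D r x1 x2 s
          \<and> chemostat_solution mu1 mu2 g1 g2 b1 b2 s_in D r x1' x2' s'
          \<and> (x1 0, x2 0, s 0) \<noteq> (x1' 0, x2' 0, s' 0)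
          \<longrightarrow> Sup ((\<lambda>t. \<bar>s t - s' t\<bar>) ` {0..r}) > 0))"

definition kappa :: "(real \<Rightarrow> real) \<Rightarrow> (real \<Rightarrow> real) \<Rightarrow> real \<Rightarrow> real" where
  "kappa g1 g2 s = deriv (\<lambda>\<sigma>. ln (g1 \<sigma> / g2 \<sigma>)) s"

end

theory Submission
  imports Defs "HOL-Analysis.Analysis"
begin

lemma GL0:
  fixes f phi :: "real \<Rightarrow> real"
  assumes int: "\<forall>t\<in>{0..r}. (phi has_integral (f t - f 0)) {0..t}"
    and T: "T \<in> {0..r}"
    and cont: "\<forall>e>0. \<exists>d>0. \<forall>\<tau>\<in>{0..r}. \<bar>\<tau> - T\<bar> < d \<longrightarrow> \<bar>phi \<tau> - L\<bar> \<le> e"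
  shows "(f has_real_derivative L) (at T within {0..r})"
proof -
  have key: "\<exists>d>0. \<forall>y\<in>{0..r}. norm (y - T) < d \<longrightarrow>
      norm (f y - f T - (y - T) * L) \<le> e * norm (y - T)" if e: "e > 0" for e
  proof -
    obtain d where d: "d > 0" "\<forall>\<tau>\<in>{0..r}. \<bar>\<tau> - T\<bar> < d \<longrightarrow> \<bar>phi \<tau> - L\<bar> \<le> e"
      using cont e by blast
    have "norm (f y - f T - (y - T) * L) \<le> e * norm (y - T)"
      if y: "y \<in> {0..r}" "norm (y - T) < d" for y
    proof (cases "T \<le> y")
      case True
      have iy: "(phi has_integral (f y - f 0)) {0..y}" using int y by auto
      have iT: "(phi has_integral (f T - f 0)) {0..T}" using int T by auto
      have iy': "phi integrable_on {0..y}" using iy by (rule has_integral_integrable)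
      have "{T..y} \<subseteq> {0..y}" using T by auto
      then have "phi integrable_on {T..y}" by (rule integrable_subinterval_real[OF iy'])
      then have iTy: "(phi has_integral integral {T..y} phi) {T..y}" by (simp add: integrable_integral)
      have "integral {0..T} phi + integral {T..y} phi = integral {0..y} phi"
        by (rule Henstock_Kurzweil_Integration.integral_combine) (use True T iy' in auto)
      then have eq: "integral {T..y} phi = f y - f T"
        using iy iT by (simp add: integral_unique)
      have "((\<lambda>u. phi u - L) has_integral (f y - f T - (y - T) * L)) {T..y}"
        using has_integral_diff[OF iTy has_integral_const_real[of L T y]] True eq
        by (simp add: mult.commute)
      moreover have "\<forall>u\<in>{T..y}. norm (phi u - L) \<le> e"
      proof
        fix u assume u: "u \<in> {T..y}"
        then have "u \<in> {0..r}" "\<bar>u - T\<bar> < d" using y T True by auto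
        then show "norm (phi u - L) \<le> e" using d(2) by simp
      qed
      ultimately have "norm (f y - f T - (y - T) * L) \<le> e * Henstock_Kurzweil_Integration.content {T..y}"
        using e by (intro has_integral_bound_real[where S="{}"]) auto
      then show ?thesis using True by simp
    next
      case False
      have iy: "(phi has_integral (f y - f 0)) {0..y}" using int y by auto
      have iT: "(phi has_integral (f T - f 0)) {0..T}" using int T by auto
      have iT': "phi integrable_on {0..T}" using iT by (rule has_integral_integrable)
      have "{y..T} \<subseteq> {0..T}" using y by auto
      then have "phi integrable_on {y..T}" by (rule integrable_subinterval_real[OF iT'])
      then have iTy: "(phi has_integral integral {y..T} phi) {y..T}" by (simp add: integrable_integral)
      have "integral {0..y} phi + integral {y..T} phi = integral {0..T} phi"
        by (rule Henstock_Kurzweil_Integration.integral_combine) (use False y iT' in auto)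
      then have eq: "integral {y..T} phi = f T - f y"
        using iy iT by (simp add: integral_unique)
      have "((\<lambda>u. phi u - L) has_integral (f T - f y - (T - y) * L)) {y..T}"
        using has_integral_diff[OF iTy has_integral_const_real[of L y T]] False eq
        by (simp add: mult.commute)
      moreover have "\<forall>u\<in>{y..T}. norm (phi u - L) \<le> e"
      proof
        fix u assume u: "u \<in> {y..T}"
        then have "u \<in> {0..r}" "\<bar>u - T\<bar> < d" using y T False by auto
        then show "norm (phi u - L) \<le> e" using d(2) by simp
      qed
      ultimately have "norm (f T - f y - (T - y) * L) \<le> e * Henstock_Kurzweil_Integration.content {y..T}"
        using e by (intro has_integral_bound_real[where S="{}"]) auto
      moreover have "norm (f y - f T - (y - T) * L) = norm (f T - f y - (T - y) * L)"
        by (simp add: abs_minus_commute algebra_simps)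
      ultimately show ?thesis using False by simp
    qed
    then show ?thesis using d by blast
  qed
  show ?thesis
    unfolding has_field_derivative_def has_derivative_within_alt
  proof (intro conjI allI impI)
    show "bounded_linear ((*) L)" by (rule bounded_linear_mult_right)
    fix e :: real assume "e > 0"
    then show "\<exists>d>0. \<forall>y\<in>{0..r}. norm (y - T) < d \<longrightarrow> norm (f y - f T - L * (y - T)) \<le> e * norm (y - T)"
      using key[OF \<open>e > 0\<close>] by (simp add: mult.commute)
  qed
qed

lemma GL:
  fixes f phi :: "real \<Rightarrow> real"
  assumes int: "\<forall>t\<in>{0..r}. (phi has_integral (f t - f 0)) {0..t}"
    and T: "T \<in> {0..r}" and N: "negligible N"
    and cont: "\<forall>e>0. \<exists>d>0. \<forall>\<tau>\<in>{0..r} - N. \<bar>\<tau> - T\<bar> < d \<longrightarrow> \<bar>phi \<tau> - L\<bar> \<le> e"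
  shows "(f has_real_derivative L) (at T within {0..r})"
proof (rule GL0[where phi="\<lambda>\<tau>. if \<tau> \<in> N then L else phi \<tau>"])
  show "\<forall>t\<in>{0..r}. ((\<lambda>\<tau>. if \<tau> \<in> N then L else phi \<tau>) has_integral f t - f 0) {0..t}"
  proof
    fix t assume "t \<in> {0..r}"
    then have "(phi has_integral f t - f 0) {0..t}" using int by auto
    then show "((\<lambda>\<tau>. if \<tau> \<in> N then L else phi \<tau>) has_integral f t - f 0) {0..t}"
      by (rule has_integral_spike[OF N, rotated]) auto
  qed
  show "T \<in> {0..r}" by (rule T)
  show "\<forall>e>0. \<exists>d>0. \<forall>\<tau>\<in>{0..r}. \<bar>\<tau> - T\<bar> < d \<longrightarrow> \<bar>(if \<tau> \<in> N then L else phi \<tau>) - L\<bar> \<le> e"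
  proof (intro allI impI)
    fix e :: real assume e: "e > 0"
    then obtain d where "d > 0" "\<forall>\<tau>\<in>{0..r} - N. \<bar>\<tau> - T\<bar> < d \<longrightarrow> \<bar>phi \<tau> - L\<bar> \<le> e"
      using cont by blast
    then show "\<exists>d>0. \<forall>\<tau>\<in>{0..r}. \<bar>\<tau> - T\<bar> < d \<longrightarrow> \<bar>(if \<tau> \<in> N then L else phi \<tau>) - L\<bar> \<le> e"
      using e by (intro exI[of _ d]) auto
  qed
qed

lemma PZ:
  fixes n w :: "real \<Rightarrow> real"
  assumes "(n has_real_derivative n') (at T within S)" "n T = 0" "continuous (at T within S) w"
  shows "((\<lambda>t. n t * w t) has_real_derivative n' * w T) (at T within S)"
proof -
  have "((\<lambda>t. (n t - n T) / (t - T) * w t) \<longlongrightarrow> n' * w T) (at T within S)"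
    using assms(1,3) unfolding has_field_derivative_iff continuous_within
    by (intro tendsto_mult)
  moreover have "(\<lambda>t. (n t - n T) / (t - T) * w t) = (\<lambda>t. (n t * w t - n T * w T) / (t - T))"
    using assms(2) by (auto simp: fun_eq_iff)
  ultimately show ?thesis unfolding has_field_derivative_iff by simp
qed

lemma cont_eps:
  fixes q :: "real \<Rightarrow> real"
  assumes "continuous_on {0..r} q" "T \<in> {0..r}" "e > 0"
  shows "\<exists>d>0. \<forall>\<tau>\<in>{0..r}. \<bar>\<tau> - T\<bar> < d \<longrightarrow> \<bar>q \<tau> - q T\<bar> \<le> e"
proof -
  obtain d where "d > 0" "\<forall>x'\<in>{0..r}. dist x' T < d \<longrightarrow> dist (q x') (q T) < e"
    using assms unfolding continuous_on_iff by blast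
  then show ?thesis by (intro exI[of _ d]) (auto simp: dist_real_def less_imp_le)
qed

lemma RL:
  fixes y z p q D :: "real \<Rightarrow> real"
  assumes T: "T \<in> {0..r}"
  and cy: "continuous_on {0..r} y" and cz: "continuous_on {0..r} z"
  and cp: "continuous_on {0..r} p" and cq: "continuous_on {0..r} q"
  and py: "\<forall>t\<in>{0..r}. 0 < y t" and pz: "\<forall>t\<in>{0..r}. 0 < z t"
  and N: "negligible N" and DB: "\<forall>\<tau>\<in>{0..r}-N. \<bar>D \<tau>\<bar> \<le> B"
  and iy: "\<forall>t\<in>{0..r}. ((\<lambda>\<tau>. (p \<tau> - D \<tau> - b) * y \<tau>) has_integral (y t - y 0)) {0..t}"
  and iz: "\<forall>t\<in>{0..r}. ((\<lambda>\<tau>. (q \<tau> - D \<tau> - b') * z \<tau>) has_integral (z t - z 0)) {0..t}"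
  shows "((\<lambda>t. z t / y t) has_real_derivative (z T / y T) * ((q T - b') - (p T - b))) (at T within {0..r})"
proof -
  define yT where "yT = y T"
  define zT where "zT = z T"
  have yT: "yT > 0" using py T by (simp add: yT_def)
  have zT: "zT > 0" using pz T by (simp add: zT_def)
  define n where "n t = yT * z t - zT * y t" for t
  define phi where "phi \<tau> = yT * ((q \<tau> - D \<tau> - b') * z \<tau>) - zT * ((p \<tau> - D \<tau> - b) * y \<tau>)" for \<tau>
  define L where "L = yT * zT * ((q T - b') - (p T - b))"
  have intn: "\<forall>t\<in>{0..r}. (phi has_integral (n t - n 0)) {0..t}"
  proof
    fix t assume t: "t \<in> {0..r}"
    have "(phi has_integral (yT * (z t - z 0) - zT * (y t - y 0))) {0..t}"
      unfolding phi_def using iy iz t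
      by (intro has_integral_diff has_integral_mult_right) auto
    moreover have "yT * (z t - z 0) - zT * (y t - y 0) = n t - n 0"
      by (simp add: n_def algebra_simps)
    ultimately show "(phi has_integral (n t - n 0)) {0..t}" by simp
  qed
  have contn: "\<forall>e>0. \<exists>d>0. \<forall>\<tau>\<in>{0..r} - N. \<bar>\<tau> - T\<bar> < d \<longrightarrow> \<bar>phi \<tau> - L\<bar> \<le> e"
  proof (intro allI impI)
    fix e :: real assume e: "e > 0"
    define M1 where "M1 = \<bar>q T\<bar> + 1 + \<bar>B\<bar> + \<bar>b'\<bar>"
    define M2 where "M2 = \<bar>p T\<bar> + 1 + \<bar>B\<bar> + \<bar>b\<bar>"
    define K where "K = 2 * yT * zT + yT * M1 + zT * M2"
    have M: "M1 > 0" "M2 > 0" unfolding M1_def M2_def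
      using abs_ge_zero[of "q T"] abs_ge_zero[of "p T"] abs_ge_zero[of B] abs_ge_zero[of b] abs_ge_zero[of b']
      by linarith+
    have K: "K > 0" using yT zT M unfolding K_def
      by (intro add_pos_pos mult_pos_pos) auto
    define \<eta> where "\<eta> = min 1 (e / K)"
    have eta: "\<eta> > 0" "\<eta> \<le> 1" "K * \<eta> \<le> e"
      using K e by (auto simp: \<eta>_def min_def field_simps)
    obtain d1 where d1: "d1 > 0" "\<forall>\<tau>\<in>{0..r}. \<bar>\<tau> - T\<bar> < d1 \<longrightarrow> \<bar>y \<tau> - y T\<bar> \<le> \<eta>"
      using cont_eps[OF cy T eta(1)] by blast
    obtain d2 where d2: "d2 > 0" "\<forall>\<tau>\<in>{0..r}. \<bar>\<tau> - T\<bar> < d2 \<longrightarrow> \<bar>z \<tau> - z T\<bar> \<le> \<eta>"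
      using cont_eps[OF cz T eta(1)] by blast
    obtain d3 where d3: "d3 > 0" "\<forall>\<tau>\<in>{0..r}. \<bar>\<tau> - T\<bar> < d3 \<longrightarrow> \<bar>p \<tau> - p T\<bar> \<le> \<eta>"
      using cont_eps[OF cp T eta(1)] by blast
    obtain d4 where d4: "d4 > 0" "\<forall>\<tau>\<in>{0..r}. \<bar>\<tau> - T\<bar> < d4 \<longrightarrow> \<bar>q \<tau> - q T\<bar> \<le> \<eta>"
      using cont_eps[OF cq T eta(1)] by blast
    define d where "d = min (min d1 d2) (min d3 d4)"
    have d: "d > 0" using d1 d2 d3 d4 by (simp add: d_def)
    have "\<bar>phi \<tau> - L\<bar> \<le> e" if tau: "\<tau> \<in> {0..r} - N" "\<bar>\<tau> - T\<bar> < d" for \<tau>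
    proof -
      have t0: "\<tau> \<in> {0..r}" using tau by auto
      have hy: "\<bar>y \<tau> - yT\<bar> \<le> \<eta>" using d1 t0 tau(2) by (auto simp: d_def yT_def)
      have hz: "\<bar>z \<tau> - zT\<bar> \<le> \<eta>" using d2 t0 tau(2) by (auto simp: d_def zT_def)
      have hp: "\<bar>p \<tau> - p T\<bar> \<le> \<eta>" using d3 t0 tau(2) by (auto simp: d_def)
      have hq: "\<bar>q \<tau> - q T\<bar> \<le> \<eta>" using d4 t0 tau(2) by (auto simp: d_def)
      have hD: "\<bar>D \<tau>\<bar> \<le> \<bar>B\<bar>" using DB tau(1) by force
      have id: "phi \<tau> - L = yT * zT * ((q \<tau> - q T) - (p \<tau> - p T))
          + yT * (q \<tau> - D \<tau> - b') * (z \<tau> - zT) - zT * (p \<tau> - D \<tau> - b) * (y \<tau> - yT)"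
        unfolding phi_def L_def by (simp add: algebra_simps)
      have a1: "\<bar>yT * zT * ((q \<tau> - q T) - (p \<tau> - p T))\<bar> \<le> yT * zT * (2 * \<eta>)"
      proof -
        have "\<bar>(q \<tau> - q T) - (p \<tau> - p T)\<bar> \<le> 2 * \<eta>" using hp hq by linarith
        then show ?thesis using yT zT by (simp add: abs_mult mult_left_mono)
      qed
      have m1: "\<bar>q \<tau> - D \<tau> - b'\<bar> \<le> M1" using hq hD eta(2) unfolding M1_def by linarith
      have m2: "\<bar>p \<tau> - D \<tau> - b\<bar> \<le> M2" using hp hD eta(2) unfolding M2_def by linarith
      have a2: "\<bar>yT * (q \<tau> - D \<tau> - b') * (z \<tau> - zT)\<bar> \<le> yT * (M1 * \<eta>)"
      proof -
        have "\<bar>q \<tau> - D \<tau> - b'\<bar> * \<bar>z \<tau> - zT\<bar> \<le> M1 * \<eta>"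
          using m1 hz by (intro mult_mono) auto
        then show ?thesis using yT by (simp add: abs_mult mult.assoc mult_left_mono)
      qed
      have a3: "\<bar>zT * (p \<tau> - D \<tau> - b) * (y \<tau> - yT)\<bar> \<le> zT * (M2 * \<eta>)"
      proof -
        have "\<bar>p \<tau> - D \<tau> - b\<bar> * \<bar>y \<tau> - yT\<bar> \<le> M2 * \<eta>"
          using m2 hy by (intro mult_mono) auto
        then show ?thesis using zT by (simp add: abs_mult mult.assoc mult_left_mono)
      qed
      have "\<bar>phi \<tau> - L\<bar> \<le> yT * zT * (2 * \<eta>) + yT * (M1 * \<eta>) + zT * (M2 * \<eta>)"
        unfolding id using a1 a2 a3 by linarith
      also have "\<dots> = K * \<eta>" by (simp add: K_def algebra_simps)
      finally show ?thesis using eta(3) by linarith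
    qed
    then show "\<exists>d>0. \<forall>\<tau>\<in>{0..r} - N. \<bar>\<tau> - T\<bar> < d \<longrightarrow> \<bar>phi \<tau> - L\<bar> \<le> e"
      using d by blast
  qed
  have dn: "(n has_real_derivative L) (at T within {0..r})"
    by (rule GL[OF intn T N contn])
  have n0: "n T = 0" by (simp add: n_def yT_def zT_def)
  have cw: "continuous (at T within {0..r}) (\<lambda>t. 1 / (y t * yT))"
  proof -
    have "continuous (at T within {0..r}) y"
      using cy T by (simp add: continuous_on_eq_continuous_within)
    then show ?thesis using yT by (intro continuous_intros) (auto simp: yT_def)
  qed
  have d2: "((\<lambda>t. zT / yT + n t * (1 / (y t * yT))) has_real_derivative
      0 + L * (1 / (y T * yT))) (at T within {0..r})"
    by (intro DERIV_add DERIV_const PZ[OF dn n0 cw])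
  have eq: "zT / yT + n t * (1 / (y t * yT)) = z t / y t" if "t \<in> {0..r}" for t
  proof -
    have "y t > 0" using py that by auto
    then show ?thesis using yT by (simp add: n_def field_simps)
  qed
  have "((\<lambda>t. z t / y t) has_real_derivative 0 + L * (1 / (y T * yT))) (at T within {0..r})"
    by (rule has_field_derivative_transform_within[OF d2 zero_less_one T]) (use eq in blast)
  moreover have "0 + L * (1 / (y T * yT)) = (z T / y T) * ((q T - b') - (p T - b))"
    using yT by (simp add: L_def yT_def zT_def field_simps)
  ultimately show ?thesis by simp
qed

lemma SL:
  fixes h h' s :: "real \<Rightarrow> real"
  assumes hd: "\<And>\<sigma>. \<sigma> \<in> {a<..<b} \<Longrightarrow> (h has_real_derivative h' \<sigma>) (at \<sigma>)"
  and hc: "isCont h' (s T)" and hne: "h' (s T) \<noteq> 0"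
  and sc: "isCont s T" and sT: "s T \<in> {a<..<b}"
  and Hd: "((\<lambda>t. h (s t)) has_real_derivative L) (at T)"
  shows "(s has_real_derivative L / h' (s T)) (at T)"
proof -
  define Q where "Q t z \<longleftrightarrow> min (s t) (s T) \<le> z \<and> z \<le> max (s t) (s T)
        \<and> h (s t) - h (s T) = (s t - s T) * h' z" for t z
  have ex: "\<exists>z. Q t z" if st: "s t \<in> {a<..<b}" for t
  proof (cases "s t = s T")
    case True then show ?thesis by (auto simp: Q_def)
  next
    case False
    show ?thesis
    proof (cases "s T < s t")
      case True
      have "\<exists>z>s T. z < s t \<and> h (s t) - h (s T) = (s t - s T) * h' z"
        using st sT True by (intro MVT2 hd) auto
      then obtain z where "z > s T" "z < s t" "h (s t) - h (s T) = (s t - s T) * h' z" by blast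
      then have "Q t z" using True by (auto simp: Q_def)
      then show ?thesis by blast
    next
      case F2: False
      then have lt: "s t < s T" using False by auto
      have "\<exists>z>s t. z < s T \<and> h (s T) - h (s t) = (s T - s t) * h' z"
        using st sT lt by (intro MVT2 hd) auto
      then obtain z where "z > s t" "z < s T" "h (s T) - h (s t) = (s T - s t) * h' z" by blast
      then have "Q t z" using lt by (auto simp: Q_def algebra_simps)
      then show ?thesis by blast
    qed
  qed
  define xi where "xi t = (SOME z. Q t z)" for t
  have stl: "(s \<longlongrightarrow> s T) (at T)" using sc by (simp add: isCont_def)
  have ev_in: "eventually (\<lambda>t. s t \<in> {a<..<b}) (at T)"
    using topological_tendstoD[OF stl, of "{a<..<b}"] sT by auto
  have evQ: "eventually (\<lambda>t. Q t (xi t)) (at T)"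
    using ev_in by eventually_elim (use ex in \<open>auto simp: xi_def intro: someI_ex\<close>)
  have xil: "(xi \<longlongrightarrow> s T) (at T)"
  proof (rule tendsto_sandwich[of "\<lambda>t. min (s t) (s T)" _ _ "\<lambda>t. max (s t) (s T)"])
    show "eventually (\<lambda>t. min (s t) (s T) \<le> xi t) (at T)"
      using evQ by eventually_elim (auto simp: Q_def)
    show "eventually (\<lambda>t. xi t \<le> max (s t) (s T)) (at T)"
      using evQ by eventually_elim (auto simp: Q_def)
    show "((\<lambda>t. min (s t) (s T)) \<longlongrightarrow> s T) (at T)"
      using tendsto_min[OF stl tendsto_const[of "s T"]] by simp
    show "((\<lambda>t. max (s t) (s T)) \<longlongrightarrow> s T) (at T)"
      using tendsto_max[OF stl tendsto_const[of "s T"]] by simp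
  qed
  have hxl: "((\<lambda>t. h' (xi t)) \<longlongrightarrow> h' (s T)) (at T)"
    by (rule isCont_tendsto_compose[OF hc xil])
  have evne: "eventually (\<lambda>t. h' (xi t) \<noteq> 0) (at T)"
    by (rule tendsto_imp_eventually_ne[OF hxl hne])
  have ql: "((\<lambda>t. (h (s t) - h (s T)) / (t - T) / h' (xi t)) \<longlongrightarrow> L / h' (s T)) (at T)"
    using Hd unfolding has_field_derivative_iff
    by (intro tendsto_divide hxl hne)
  have "eventually (\<lambda>t. (h (s t) - h (s T)) / (t - T) / h' (xi t) = (s t - s T) / (t - T)) (at T)"
    using evQ evne by eventually_elim (auto simp: Q_def)
  then have "((\<lambda>t. (s t - s T) / (t - T)) \<longlongrightarrow> L / h' (s T)) (at T)"
    using ql by (rule Lim_transform_eventually[rotated])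
  then show ?thesis unfolding has_field_derivative_iff .
qed

lemma kin:
  assumes "kinetic_fun f"
  obtains f' where "\<And>\<sigma>. \<sigma> > 0 \<Longrightarrow> (f has_real_derivative f' \<sigma>) (at \<sigma>)"
    "\<And>\<sigma>. \<sigma> > 0 \<Longrightarrow> isCont f' \<sigma>" "\<And>\<sigma>. \<sigma> > 0 \<Longrightarrow> f \<sigma> > 0"
    "\<And>\<sigma>. \<sigma> > 0 \<Longrightarrow> isCont f \<sigma>"
proof -
  obtain f' where d: "\<forall>s\<ge>0. (f has_real_derivative f' s) (at s within {0..})"
    and c: "continuous_on {0..} f'" and p: "\<forall>s>0. f s > 0"
    using assms unfolding kinetic_fun_def by blast
  have d': "(f has_real_derivative f' \<sigma>) (at \<sigma>)" if "\<sigma> > 0" for \<sigma>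
  proof -
    have "at \<sigma> within {0..} = at \<sigma>" using that by (intro at_within_interior) auto
    then show ?thesis using d that by (metis less_imp_le)
  qed
  show ?thesis
  proof (rule that)
    show "\<And>\<sigma>. \<sigma> > 0 \<Longrightarrow> (f has_real_derivative f' \<sigma>) (at \<sigma>)" by (rule d')
    show "\<And>\<sigma>. \<sigma> > 0 \<Longrightarrow> isCont f' \<sigma>"
      using c by (intro continuous_on_interior[of "{0..}"]) auto
    show "\<And>\<sigma>. \<sigma> > 0 \<Longrightarrow> f \<sigma> > 0" using p by auto
    show "\<And>\<sigma>. \<sigma> > 0 \<Longrightarrow> isCont f \<sigma>" using d' by (rule DERIV_isCont)
  qed
qed

lemma cont_comp:
  assumes "\<And>\<sigma>. \<sigma> > 0 \<Longrightarrow> isCont f \<sigma>" "continuous_on {0..r} s" "\<forall>t\<in>{0..r}. 0 < s t"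
  shows "continuous_on {0..r} (\<lambda>t. f (s t))"
proof (rule continuous_on_compose2[of "{0<..}" f])
  show "continuous_on {0<..} f" using assms(1) by (intro continuous_at_imp_continuous_on) auto
qed (use assms in auto)

theorem theorem3p8:
  fixes mu1 mu2 g1 g2 :: "real \<Rightarrow> real" and b1 b2 s_in c r :: real
  assumes "kinetic_fun mu1" and "kinetic_fun mu2" and "kinetic_fun g1" and "kinetic_fun g2"
    and "b1 \<ge> 0" and "b2 \<ge> 0" and "s_in > 0" and "c > 0"
    and "(\<forall>s\<in>{0<..<s_in}. kappa g1 g2 s \<noteq> 0
              \<and> (mu2 s - mu1 s + b1 - b2) / kappa g1 g2 s \<le> - c)
       \<or> (\<forall>s\<in>{0<..<s_in}. kappa g1 g2 s \<noteq> 0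
              \<and> (mu2 s - mu1 s + b1 - b2) / kappa g1 g2 s \<ge> c)"
    and "r \<ge> s_in / c"
  shows "strongly_observable mu1 mu2 g1 g2 b1 b2 s_in r"
proof -
  have crs: "s_in \<le> c * r" using assms(8,10) by (simp add: pos_divide_le_eq mult.commute)
  have r: "r > 0" using crs assms(7,8) by (smt (verit) mult_nonneg_nonpos)
  obtain mu1' where mu1: "\<And>\<sigma>. \<sigma> > 0 \<Longrightarrow> isCont mu1 \<sigma>" using kin[OF assms(1)] by metis
  obtain mu2' where mu2: "\<And>\<sigma>. \<sigma> > 0 \<Longrightarrow> isCont mu2 \<sigma>" using kin[OF assms(2)] by metis
  obtain g1' where g1d: "\<And>\<sigma>. \<sigma> > 0 \<Longrightarrow> (g1 has_real_derivative g1' \<sigma>) (at \<sigma>)"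
    and g1'c: "\<And>\<sigma>. \<sigma> > 0 \<Longrightarrow> isCont g1' \<sigma>" and g1p: "\<And>\<sigma>. \<sigma> > 0 \<Longrightarrow> g1 \<sigma> > 0"
    and g1c: "\<And>\<sigma>. \<sigma> > 0 \<Longrightarrow> isCont g1 \<sigma>"
    using kin[OF assms(3)] by metis
  obtain g2' where g2d: "\<And>\<sigma>. \<sigma> > 0 \<Longrightarrow> (g2 has_real_derivative g2' \<sigma>) (at \<sigma>)"
    and g2'c: "\<And>\<sigma>. \<sigma> > 0 \<Longrightarrow> isCont g2' \<sigma>" and g2p: "\<And>\<sigma>. \<sigma> > 0 \<Longrightarrow> g2 \<sigma> > 0"
    and g2c: "\<And>\<sigma>. \<sigma> > 0 \<Longrightarrow> isCont g2 \<sigma>"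
    using kin[OF assms(4)] by metis
  define h where "h \<sigma> = ln (g1 \<sigma> / g2 \<sigma>)" for \<sigma>
  define h' where "h' \<sigma> = g1' \<sigma> / g1 \<sigma> - g2' \<sigma> / g2 \<sigma>" for \<sigma>
  have hd: "(h has_real_derivative h' \<sigma>) (at \<sigma>)" if "\<sigma> > 0" for \<sigma>
  proof -
    have p1: "g1 \<sigma> > 0" and p2: "g2 \<sigma> > 0" using g1p g2p that by auto
    show ?thesis unfolding h_def h'_def
      using p1 p2 g1d[OF that] g2d[OF that]
      by (auto intro!: derivative_eq_intros simp: field_simps power2_eq_square)
  qed
  have kap: "kappa g1 g2 \<sigma> = h' \<sigma>" if "\<sigma> > 0" for \<sigma>
    unfolding kappa_def using hd[OF that] unfolding h_def by (rule DERIV_imp_deriv)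
  have h'c: "isCont h' \<sigma>" if "\<sigma> > 0" for \<sigma>
    unfolding h'_def using that g1'c g2'c g1c g2c g1p g2p
    by (intro continuous_intros) (auto simp: less_imp_neq[symmetric] dest: g1p g2p)
  show ?thesis
    unfolding strongly_observable_def
  proof (intro conjI allI impI r)
    fix D x1 x2 s x1' x2' s'
    assume adm: "admissible_input r D"
    assume H: "chemostat_solution mu1 mu2 g1 g2 b1 b2 s_in D r x1 x2 s \<and>
       chemostat_solution mu1 mu2 g1 g2 b1 b2 s_in D r x1' x2' s' \<and>
       (x1 0, x2 0, s 0) \<noteq> (x1' 0, x2' 0, s' 0)"
    have pos: "\<forall>t\<in>{0..r}. 0 < x1 t \<and> 0 < x2 t \<and> 0 < s t \<and> s t < s_in"
      and cx1: "continuous_on {0..r} x1" and cx2: "continuous_on {0..r} x2"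
      and cs: "continuous_on {0..r} s"
      and ix1: "\<forall>t\<in>{0..r}. ((\<lambda>\<tau>. (mu1 (s \<tau>) - D \<tau> - b1) * x1 \<tau>) has_integral (x1 t - x1 0)) {0..t}"
      and ix2: "\<forall>t\<in>{0..r}. ((\<lambda>\<tau>. (mu2 (s \<tau>) - D \<tau> - b2) * x2 \<tau>) has_integral (x2 t - x2 0)) {0..t}"
      and isol: "\<forall>t\<in>{0..r}. ((\<lambda>\<tau>. D \<tau> * (s_in - s \<tau>) - g1 (s \<tau>) * x1 \<tau> - g2 (s \<tau>) * x2 \<tau>)
                        has_integral (s t - s 0)) {0..t}"
      using H unfolding chemostat_solution_def by auto
    have pos': "\<forall>t\<in>{0..r}. 0 < x1' t \<and> 0 < x2' t \<and> 0 < s' t \<and> s' t < s_in"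
      and cx1': "continuous_on {0..r} x1'" and cx2': "continuous_on {0..r} x2'"
      and cs': "continuous_on {0..r} s'"
      and ix1': "\<forall>t\<in>{0..r}. ((\<lambda>\<tau>. (mu1 (s' \<tau>) - D \<tau> - b1) * x1' \<tau>) has_integral (x1' t - x1' 0)) {0..t}"
      and ix2': "\<forall>t\<in>{0..r}. ((\<lambda>\<tau>. (mu2 (s' \<tau>) - D \<tau> - b2) * x2' \<tau>) has_integral (x2' t - x2' 0)) {0..t}"
      and isol': "\<forall>t\<in>{0..r}. ((\<lambda>\<tau>. D \<tau> * (s_in - s' \<tau>) - g1 (s' \<tau>) * x1' \<tau> - g2 (s' \<tau>) * x2' \<tau>)
                        has_integral (s' t - s' 0)) {0..t}"
      using H unfolding chemostat_solution_def by auto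
    have neq: "(x1 0, x2 0, s 0) \<noteq> (x1' 0, x2' 0, s' 0)" using H by blast
    have spos: "\<forall>t\<in>{0..r}. 0 < s t" and spos': "\<forall>t\<in>{0..r}. 0 < s' t" using pos pos' by auto
    show "Sup ((\<lambda>t. \<bar>s t - s' t\<bar>) ` {0..r}) > 0"
    proof (rule ccontr)
      assume nsup: "\<not> Sup ((\<lambda>t. \<bar>s t - s' t\<bar>) ` {0..r}) > 0"
      have bdd: "bdd_above ((\<lambda>t. \<bar>s t - s' t\<bar>) ` {0..r})"
        by (intro bounded_imp_bdd_above compact_imp_bounded compact_continuous_image
            continuous_intros cs cs') auto
      have seq: "s' t = s t" if t: "t \<in> {0..r}" for t
      proof -
        have "\<bar>s t - s' t\<bar> \<le> Sup ((\<lambda>t. \<bar>s t - s' t\<bar>) ` {0..r})"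
          using bdd t by (intro cSup_upper) auto
        then show ?thesis using nsup by linarith
      qed
      obtain B where "AE t in lborel. t \<in> {0..r} \<longrightarrow> \<bar>D t\<bar> \<le> B"
        using adm unfolding admissible_input_def by blast
      then obtain N where Nsub: "\<And>x. x \<in> space lborel - N \<Longrightarrow> (x \<in> {0..r} \<longrightarrow> \<bar>D x\<bar> \<le> B)"
        and Nnull: "N \<in> null_sets lborel"
        by (rule AE_E3) blast
      have N: "negligible N"
        unfolding negligible_iff_null_sets using Nnull by (rule null_sets_completionI)
      have DB: "\<forall>\<tau>\<in>{0..r}-N. \<bar>D \<tau>\<bar> \<le> B" using Nsub by auto
      have cm1: "continuous_on {0..r} (\<lambda>\<tau>. mu1 (s \<tau>))" by (rule cont_comp[OF mu1 cs spos])
      have cm1': "continuous_on {0..r} (\<lambda>\<tau>. mu1 (s' \<tau>))" by (rule cont_comp[OF mu1 cs' spos'])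
      have cm2: "continuous_on {0..r} (\<lambda>\<tau>. mu2 (s \<tau>))" by (rule cont_comp[OF mu2 cs spos])
      have cm2': "continuous_on {0..r} (\<lambda>\<tau>. mu2 (s' \<tau>))" by (rule cont_comp[OF mu2 cs' spos'])
      have cg1: "continuous_on {0..r} (\<lambda>\<tau>. g1 (s \<tau>))" by (rule cont_comp[OF g1c cs spos])
      have cg2: "continuous_on {0..r} (\<lambda>\<tau>. g2 (s \<tau>))" by (rule cont_comp[OF g2c cs spos])
      have px1: "\<forall>t\<in>{0..r}. 0 < x1 t" and px2: "\<forall>t\<in>{0..r}. 0 < x2 t"
        and px1': "\<forall>t\<in>{0..r}. 0 < x1' t" and px2': "\<forall>t\<in>{0..r}. 0 < x2' t"
        using pos pos' by auto
      have "((\<lambda>t. x1' t / x1 t) has_real_derivative 0) (at T within {0..r})" if T: "T \<in> {0..r}" for T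
      proof -
        have "((\<lambda>t. x1' t / x1 t) has_real_derivative (x1' T / x1 T) * ((mu1 (s' T) - b1) - (mu1 (s T) - b1)))
             (at T within {0..r})"
          using RL[where y=x1 and z=x1' and p="\<lambda>\<tau>. mu1 (s \<tau>)" and q="\<lambda>\<tau>. mu1 (s' \<tau>)"
              and N=N and B=B and D=D and b=b1 and b'=b1 and r=r and T=T]
            T cx1 cx1' cm1 cm1' px1 px1' N DB ix1 ix1' by simp
        then show ?thesis using seq[OF T] by simp
      qed
      then obtain C1 where C1: "\<forall>t\<in>{0..r}. x1' t / x1 t = C1"
        using has_field_derivative_zero_constant[of "{0..r}" "\<lambda>t. x1' t / x1 t"] by auto
      have "((\<lambda>t. x2' t / x2 t) has_real_derivative 0) (at T within {0..r})" if T: "T \<in> {0..r}" for T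
      proof -
        have "((\<lambda>t. x2' t / x2 t) has_real_derivative (x2' T / x2 T) * ((mu2 (s' T) - b2) - (mu2 (s T) - b2)))
             (at T within {0..r})"
          using RL[where y=x2 and z=x2' and p="\<lambda>\<tau>. mu2 (s \<tau>)" and q="\<lambda>\<tau>. mu2 (s' \<tau>)"
              and N=N and B=B and D=D and b=b2 and b'=b2 and r=r and T=T]
            T cx2 cx2' cm2 cm2' px2 px2' N DB ix2 ix2' by simp
        then show ?thesis using seq[OF T] by simp
      qed
      then obtain C2 where C2: "\<forall>t\<in>{0..r}. x2' t / x2 t = C2"
        using has_field_derivative_zero_constant[of "{0..r}" "\<lambda>t. x2' t / x2 t"] by auto
      have rat1: "x1' t = C1 * x1 t" if "t \<in> {0..r}" for t
        using C1 px1 that by (metis divide_eq_eq less_irrefl)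
      have rat2: "x2' t = C2 * x2 t" if "t \<in> {0..r}" for t
        using C2 px2 that by (metis divide_eq_eq less_irrefl)
      define psi where "psi \<tau> = g1 (s \<tau>) * (C1 - 1) * x1 \<tau> + g2 (s \<tau>) * (C2 - 1) * x2 \<tau>" for \<tau>
      have cpsi: "continuous_on {0..r} psi" unfolding psi_def
        by (intro continuous_intros cg1 cg2 cx1 cx2)
      have psi0: "psi T = 0" if T: "T \<in> {0..r}" for T
      proof -
        define phi where "phi \<tau> = (D \<tau> * (s_in - s \<tau>) - g1 (s \<tau>) * x1 \<tau> - g2 (s \<tau>) * x2 \<tau>)
            - (D \<tau> * (s_in - s' \<tau>) - g1 (s' \<tau>) * x1' \<tau> - g2 (s' \<tau>) * x2' \<tau>)" for \<tau>
        have int: "\<forall>t\<in>{0..r}. (phi has_integral (s t - s' t - (s 0 - s' 0))) {0..t}"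
        proof
          fix t assume t: "t \<in> {0..r}"
          have "(phi has_integral ((s t - s 0) - (s' t - s' 0))) {0..t}"
            unfolding phi_def by (rule has_integral_diff) (use isol isol' t in auto)
          then show "(phi has_integral (s t - s' t - (s 0 - s' 0))) {0..t}"
            by (simp add: algebra_simps)
        qed
        have eqp: "phi \<tau> = psi \<tau>" if "\<tau> \<in> {0..r}" for \<tau>
          unfolding phi_def psi_def using seq[OF that] rat1[OF that] rat2[OF that]
          by (simp add: algebra_simps)
        have cont: "\<forall>e>0. \<exists>d>0. \<forall>\<tau>\<in>{0..r} - {}. \<bar>\<tau> - T\<bar> < d \<longrightarrow> \<bar>phi \<tau> - psi T\<bar> \<le> e"
        proof (intro allI impI)
          fix e :: real assume "e > 0"
          then obtain d where "d > 0" "\<forall>\<tau>\<in>{0..r}. \<bar>\<tau> - T\<bar> < d \<longrightarrow> \<bar>psi \<tau> - psi T\<bar> \<le> e"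
            using cont_eps[OF cpsi T] by blast
          then show "\<exists>d>0. \<forall>\<tau>\<in>{0..r} - {}. \<bar>\<tau> - T\<bar> < d \<longrightarrow> \<bar>phi \<tau> - psi T\<bar> \<le> e"
            using eqp by (intro exI[of _ d]) auto
        qed
        have d1: "((\<lambda>t. s t - s' t) has_real_derivative psi T) (at T within {0..r})"
          by (rule GL[where f="\<lambda>t. s t - s' t" and N="{}"]) (use int T cont in auto)
        have d0: "((\<lambda>t. s t - s' t) has_real_derivative 0) (at T within {0..r})"
          by (rule has_field_derivative_transform_within[OF DERIV_const zero_less_one T]) (use seq in auto)
        show ?thesis
          using vector_derivative_unique_within_closed_interval[of 0 r T "\<lambda>t. s t - s' t" "psi T" 0] d1 d0 r T
          by (simp add: has_real_derivative_iff_has_vector_derivative)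
      qed
      have r0: "0 \<in> {0..r}" using r by auto
      have s00: "s' 0 = s 0" using seq[OF r0] .
      have x10: "x1 0 > 0" and x20: "x2 0 > 0" using px1 px2 r0 by auto
      have s0p: "s 0 > 0" using spos r0 by auto
      have g10: "g1 (s 0) > 0" and g20: "g2 (s 0) > 0" using g1p g2p s0p by auto
      have Cne: "C1 \<noteq> 1 \<or> C2 \<noteq> 1"
      proof (rule ccontr)
        assume "\<not> (C1 \<noteq> 1 \<or> C2 \<noteq> 1)"
        then have "C1 = 1" "C2 = 1" by auto
        then have "x1' 0 = x1 0" "x2' 0 = x2 0" using rat1[OF r0] rat2[OF r0] by auto
        then show False using neq s00 by auto
      qed
      have p0: "g1 (s 0) * (C1 - 1) * x1 0 + g2 (s 0) * (C2 - 1) * x2 0 = 0"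
        using psi0[OF r0] by (simp add: psi_def)
      have C1ne: "C1 \<noteq> 1"
      proof
        assume "C1 = 1"
        then have "g2 (s 0) * (C2 - 1) * x2 0 = 0" using p0 by simp
        then have "C2 = 1" using g20 x20 by simp
        then show False using Cne \<open>C1 = 1\<close> by simp
      qed
      have C2ne: "C2 \<noteq> 1"
      proof
        assume "C2 = 1"
        then have "g1 (s 0) * (C1 - 1) * x1 0 = 0" using p0 by simp
        then have "C1 = 1" using g10 x10 by simp
        then show False using C1ne by simp
      qed
      define K where "K = (1 - C2) / (C1 - 1)"
      have rel: "g1 (s t) / g2 (s t) = K * (x2 t / x1 t)" if t: "t \<in> {0..r}" for t
      proof -
        have "g1 (s t) * (C1 - 1) * x1 t + g2 (s t) * (C2 - 1) * x2 t = 0"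
          using psi0[OF t] by (simp add: psi_def)
        moreover have "g2 (s t) > 0" "x1 t > 0" using g2p spos px1 t by auto
        ultimately show ?thesis using C1ne unfolding K_def
          by (simp add: field_simps)
      qed
      have Kpos: "K > 0"
      proof -
        have "0 < K * (x2 0 / x1 0)" using rel[OF r0] g10 g20 by (metis divide_pos_pos)
        moreover have "x2 0 / x1 0 > 0" using x10 x20 by simp
        ultimately show ?thesis by (metis zero_less_mult_iff order_less_asym)
      qed
      have hs: "h (s t) = ln K + ln (x2 t / x1 t)" if t: "t \<in> {0..r}" for t
      proof -
        have q: "x2 t / x1 t > 0" using px1 px2 t by auto
        show ?thesis unfolding h_def rel[OF t] using ln_mult_pos[OF Kpos q] by simp
      qed
      have sder: "(s has_real_derivative (mu2 (s T) - b2 - (mu1 (s T) - b1)) / h' (s T)) (at T)"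
        if T: "T \<in> {0<..<r}" for T
      proof -
        have T': "T \<in> {0..r}" using T by auto
        have atT: "at T within {0..r} = at T" using T by (intro at_within_Icc_at) auto
        have dr: "((\<lambda>t. x2 t / x1 t) has_real_derivative (x2 T / x1 T) * ((mu2 (s T) - b2) - (mu1 (s T) - b1))) (at T)"
          using RL[where y=x1 and z=x2 and p="\<lambda>\<tau>. mu1 (s \<tau>)" and q="\<lambda>\<tau>. mu2 (s \<tau>)"
              and N=N and B=B and D=D and b=b1 and b'=b2 and r=r and T=T]
            T' cx1 cx2 cm1 cm2 px1 px2 N DB ix1 ix2 atT by simp
        have pr: "x2 T / x1 T > 0" using px1 px2 T' by auto
        have dl: "((\<lambda>t. ln K + ln (x2 t / x1 t)) has_real_derivative (mu2 (s T) - b2 - (mu1 (s T) - b1))) (at T)"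
        proof -
          have "((\<lambda>t. ln K + ln (x2 t / x1 t)) has_real_derivative
              0 + 1 / (x2 T / x1 T) * ((x2 T / x1 T) * ((mu2 (s T) - b2) - (mu1 (s T) - b1)))) (at T)"
            by (rule DERIV_add[OF DERIV_const DERIV_chain2[OF DERIV_ln_divide[OF pr] dr]])
          moreover have "0 + 1 / (x2 T / x1 T) * ((x2 T / x1 T) * ((mu2 (s T) - b2) - (mu1 (s T) - b1)))
              = mu2 (s T) - b2 - (mu1 (s T) - b1)"
          proof -
            have aux: "\<And>a X :: real. a \<noteq> 0 \<Longrightarrow> 0 + 1 / a * (a * X) = X" by simp
            show ?thesis by (rule aux) (use pr in auto)
          qed
          ultimately show ?thesis by simp
        qed
        have Hd: "((\<lambda>t. h (s t)) has_real_derivative (mu2 (s T) - b2 - (mu1 (s T) - b1))) (at T)"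
          by (rule has_field_derivative_transform_within_open[OF dl, of "{0<..<r}"]) (use T hs in auto)
        have sT: "s T \<in> {0<..<s_in}" using pos T' by auto
        have sc: "isCont s T"
          using cs T by (intro continuous_on_interior[of "{0..r}"]) auto
        have hne: "h' (s T) \<noteq> 0" using assms(9) sT kap[of "s T"] by auto
        show ?thesis
          by (rule SL[where a=0 and b=s_in and h=h and h'=h']) (use hd h'c sT hne sc Hd in auto)
      qed
      obtain l z where z: "0 < z" "z < r" and dz: "(s has_real_derivative l) (at z)"
        and eqs: "s r - s 0 = (r - 0) * l"
        using MVT[of 0 r s] r cs sder by (auto simp: real_differentiable_def)
      have sz: "s z \<in> {0<..<s_in}" using pos z by auto
      have lz: "l = (mu2 (s z) - mu1 (s z) + b1 - b2) / kappa g1 g2 (s z)"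
        using DERIV_unique[OF dz sder[of z]] z kap[of "s z"] sz by (simp add: algebra_simps)
      have sr: "0 < s r" and s0: "s 0 < s_in" using pos r0 r by auto
      have sr2: "s r < s_in" and s02: "0 < s 0" using pos r0 r by auto
      show False
        using assms(9)
      proof
        assume A: "\<forall>s\<in>{0<..<s_in}. kappa g1 g2 s \<noteq> 0 \<and> (mu2 s - mu1 s + b1 - b2) / kappa g1 g2 s \<le> - c"
        then have "l \<le> - c" using lz sz by auto
        then have "r * l \<le> r * (- c)" using r by (intro mult_left_mono) auto
        then have "r * l \<le> - (c * r)" by (simp add: mult.commute)
        moreover have "s r - s 0 = r * l" using eqs by simp
        ultimately show False using crs sr s0 by linarith
      next
        assume A: "\<forall>s\<in>{0<..<s_in}. kappa g1 g2 s \<noteq> 0 \<and> (mu2 s - mu1 s + b1 - b2) / kappa g1 g2 s \<ge> c"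
        then have "l \<ge> c" using lz sz by auto
        then have "r * l \<ge> r * c" using r by (intro mult_left_mono) auto
        then have "r * l \<ge> c * r" by (simp add: mult.commute)
        moreover have "s r - s 0 = r * l" using eqs by simp
        ultimately show False using crs sr2 s02 by linarith
      qed
    qed
  qed
qed

end
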